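(* Let $\mathcal{X}$ be either the closure of an open subset of $\mathbb{R}^d$ or an orientable smooth $d$-dimensional Riemannian manifold, with its geodesic distance $d_\mathcal{X}$. Let $G$ be a locally compact Lie group acting smoothly, properly and faithfully on $\mathcal{X}$, and let $U\subseteq G$ be a compact set with nonempty interior containing the identity. Fix $x\in\mathcal{X}$ and $h>0$, and let $\{g^i_{x,h}\}_{i=1}^m\subseteq U$ be the group elements produced by the construction described in the context. Then $$m\ \ge\ \max\Big(1,\ \big(R_x^{[x]_U}(2h)^{-1}\big)^{\dim [x]_U}\Big),$$ and $d_\mathcal{X}(g^i_{x,h}\cdot x,\ g^j_{x,h}\cdot x)\ge 2h$ whenever $i\neq j$.
   Context: Construction. Isometrically embed $\mathcal{X}$ in some $\mathbb{R}^q$, extend $d_\mathcal{X}$ by the Euclidean metric of $\mathbb{R}^q$, and regard all points of $\mathcal{X}$ and the tangent space $T_x[x]_U$ (as an affine subspace through $x$) via this embedding. Here $[x]_U=\{g\cdot x: g\in U\}$, a compact submanifold of the orbit $[x]_G=\{g\cdot x:g\in G\}$ of the same dimension. Let $W_x^{[x]_U}$ be the largest hypercube in $T_x[x]_U$ contained in the orthogonal projection of $[x]_U$ onto $T_x[x]_U$, and let $R_x^{[x]_U}$ be its side length; if the orbit is $0$-dimensional, set $R_x^{[x]_U}=1$. Then: (1) pick a maximal grid $\{a_i\}_{i=1}^m$ in $W_x^{[x]_U}$ with $d(a_i,a_j)\ge 2h$ for $i\ne j$; (2) orthogonally (with respect to $T_x[x]_U$) project this grid onto $[x]_U$, giving points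 $\{u_i\}_{i=1}^m\subseteq[x]_U$; (3) pick any $g^i_{x,h}\in U$ with $g^i_{x,h}\cdot x=u_i$. *)

theory Defs
  imports "HOL-Analysis.Analysis"
begin

text \<open>Orthogonal projection onto the affine subspace x + span {e j | j < k}
  (e an orthonormal family), i.e. onto the tangent space T_x[x]_U regarded as an
  affine subspace through x.\<close>
definition proj_aff :: "'a::euclidean_space \<Rightarrow> (nat \<Rightarrow> 'a) \<Rightarrow> nat \<Rightarrow> 'a \<Rightarrow> 'a" where
  "proj_aff x e k p = x + (\<Sum>j<k. ((p - x) \<bullet> e j) *\<^sub>R e j)"

definition hcube :: "'a::euclidean_space \<Rightarrow> (nat \<Rightarrow> 'a) \<Rightarrow> nat \<Rightarrow> real \<Rightarrow> 'a set" where
  "hcube c e k R = {c + (\<Sum>j<k. t j *\<^sub>R e j) | t. \<forall>j<k. 0 \<le> t j \<and> t j \<le> R}"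

definition grid_idx :: "nat \<Rightarrow> real \<Rightarrow> real \<Rightarrow> (nat \<Rightarrow> nat) set" where
  "grid_idx k R h = ({..<k} \<rightarrow>\<^sub>E {0..nat \<lfloor>R / (2 * h)\<rfloor>})"

definition grid_pt :: "'a::euclidean_space \<Rightarrow> (nat \<Rightarrow> 'a) \<Rightarrow> nat \<Rightarrow> real \<Rightarrow> (nat \<Rightarrow> nat) \<Rightarrow> 'a" where
  "grid_pt c e k h n = c + (\<Sum>j<k. (2 * h * real (n j)) *\<^sub>R e j)"

end

theory Submission
  imports Defs
begin

lemma delta_help:
  fixes a b :: "nat \<Rightarrow> real"
  assumes "i < k"
  shows "(\<Sum>j<k. if i = j then a i * b j else 0) = a i * b i"
proof -
  have "(\<Sum>j<k. if i = j then a i * b j else 0) = (if i \<in> {..<k} then a i * b i else 0)"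
    by (rule sum.delta') simp
  thus ?thesis using assms by simp
qed

lemma ip_orth:
  fixes k :: nat and a b :: "nat \<Rightarrow> real"
  assumes orth: "\<And>i j. i < k \<Longrightarrow> j < k \<Longrightarrow> e i \<bullet> e j = (if i = j then 1 else (0::real))"
  shows "(\<Sum>j<k. a j *\<^sub>R e j) \<bullet> (\<Sum>j<k. b j *\<^sub>R e j) = (\<Sum>j<k. a j * b j)"
proof -
  have "(\<Sum>j<k. a j *\<^sub>R e j) \<bullet> (\<Sum>j<k. b j *\<^sub>R e j)
      = (\<Sum>i<k. \<Sum>j<k. a i * b j * (e i \<bullet> e j))"
    by (simp add: inner_sum_left inner_sum_right sum_distrib_left ac_simps) (subst sum.swap, simp add: ac_simps)
  also have "\<dots> = (\<Sum>i<k. \<Sum>j<k. (if i = j then a i * b j else 0))"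
    by (intro sum.cong refl) (simp add: orth)
  also have "\<dots> = (\<Sum>i<k. a i * b i)"
  proof (rule sum.cong[OF refl])
    fix i assume "i \<in> {..<k}"
    thus "(\<Sum>j<k. if i = j then a i * b j else 0) = a i * b i"
      using delta_help[of i k a b] by simp
  qed
  finally show ?thesis .
qed

lemma contr:
  fixes v :: "'a::euclidean_space" and k :: nat
  assumes orth: "\<And>i j. i < k \<Longrightarrow> j < k \<Longrightarrow> e i \<bullet> e j = (if i = j then 1 else (0::real))"
  shows "norm (\<Sum>j<k. (v \<bullet> e j) *\<^sub>R e j) \<le> norm v"
proof -
  define w where "w = (\<Sum>j<k. (v \<bullet> e j) *\<^sub>R e j)"
  have "w \<bullet> w = (\<Sum>j<k. (v \<bullet> e j) * (v \<bullet> e j))"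
    unfolding w_def by (rule ip_orth[OF orth])
  moreover have "v \<bullet> w = (\<Sum>j<k. (v \<bullet> e j) * (v \<bullet> e j))"
    unfolding w_def by (simp add: inner_sum_right)
  ultimately have "w \<bullet> w = v \<bullet> w" by simp
  hence "norm w * norm w \<le> norm v * norm w"
    using norm_cauchy_schwarz[of v w] by (simp add: power2_norm_eq_inner[symmetric] power2_eq_square)
  then show ?thesis unfolding w_def[symmetric]
    by (cases "norm w = 0") (auto simp: mult_le_cancel_right)
qed

theorem proposition1:
  fixes X :: "'a::euclidean_space set"
    and dX :: "'a \<Rightarrow> 'a \<Rightarrow> real"
    and act :: "'g \<Rightarrow> 'a \<Rightarrow> 'a"
    and U :: "'g set"
    and x c :: 'a
    and e :: "nat \<Rightarrow> 'a"
    and k :: nat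
    and h R :: real
    and g :: "(nat \<Rightarrow> nat) \<Rightarrow> 'g"
  assumes dX_ge: "\<And>p q. p \<in> X \<Longrightarrow> q \<in> X \<Longrightarrow> dist p q \<le> dX p q"
    and x_in: "x \<in> X"
    and act_in: "\<And>u. u \<in> U \<Longrightarrow> act u x \<in> X"
    and orth: "\<And>i j. i < k \<Longrightarrow> j < k \<Longrightarrow> e i \<bullet> e j = (if i = j then 1 else 0)"
    and h_pos: "h > 0"
    and R_pos: "R > 0"
    and cube_in: "hcube c e k R \<subseteq> proj_aff x e k ` ((\<lambda>u. act u x) ` U)"
    and g_in: "\<And>n. n \<in> grid_idx k R h \<Longrightarrow> g n \<in> U"
    and g_proj: "\<And>n. n \<in> grid_idx k R h \<Longrightarrow>
                   proj_aff x e k (act (g n) x) = grid_pt c e k h n"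
  shows "max 1 ((R / (2 * h)) ^ k) \<le> real (card (grid_idx k R h))
         \<and> (\<forall>n\<in>grid_idx k R h. \<forall>n'\<in>grid_idx k R h. n \<noteq> n' \<longrightarrow>
               2 * h \<le> dX (act (g n) x) (act (g n') x))"
proof
  define N where "N = nat \<lfloor>R / (2 * h)\<rfloor>"
  have card: "card (grid_idx k R h) = (N + 1) ^ k"
    unfolding grid_idx_def N_def by (simp add: card_PiE)
  have "R / (2 * h) \<le> real N + 1"
  proof -
    have "0 \<le> \<lfloor>R / (2 * h)\<rfloor>" using R_pos h_pos by simp
    hence "real N = of_int \<lfloor>R / (2 * h)\<rfloor>" unfolding N_def by simp
    thus ?thesis by linarith
  qed
  hence "(R / (2 * h)) ^ k \<le> (real N + 1) ^ k"
    using R_pos h_pos by (intro power_mono) auto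
  moreover have "1 \<le> (real N + 1) ^ k" by simp
  ultimately show "max 1 ((R / (2 * h)) ^ k) \<le> real (card (grid_idx k R h))"
    unfolding card by (simp add: add.commute)
next
  show "\<forall>n\<in>grid_idx k R h. \<forall>n'\<in>grid_idx k R h. n \<noteq> n' \<longrightarrow>
               2 * h \<le> dX (act (g n) x) (act (g n') x)"
  proof (intro ballI impI)
    fix n n' assume n: "n \<in> grid_idx k R h" and n': "n' \<in> grid_idx k R h" and ne: "n \<noteq> n'"
    obtain j0 where j0: "j0 < k" "n j0 \<noteq> n' j0"
      using n n' ne unfolding grid_idx_def
      by (metis PiE_ext lessThan_iff)
    define p where "p = act (g n) x"
    define q where "q = act (g n') x"
    have pX: "p \<in> X" and qX: "q \<in> X" unfolding p_def q_def using act_in g_in n n' by auto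
    have "proj_aff x e k p - proj_aff x e k q = (\<Sum>j<k. ((p - q) \<bullet> e j) *\<^sub>R e j)"
      unfolding proj_aff_def by (simp add: sum_subtractf[symmetric] inner_diff_left scaleR_diff_left)
    hence c1: "norm (proj_aff x e k p - proj_aff x e k q) \<le> norm (p - q)"
      using contr[OF orth] by metis
    have c2: "proj_aff x e k p - proj_aff x e k q = grid_pt c e k h n - grid_pt c e k h n'"
      using g_proj n n' unfolding p_def q_def by simp
    have gd: "grid_pt c e k h n - grid_pt c e k h n'
        = (\<Sum>j<k. (2 * h * real (n j) - 2 * h * real (n' j)) *\<^sub>R e j)"
      unfolding grid_pt_def by (simp add: sum_subtractf[symmetric] scaleR_diff_left)
    define a where "a = (\<lambda>j. 2 * h * real (n j) - 2 * h * real (n' j))"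
    have sq: "norm (grid_pt c e k h n - grid_pt c e k h n') ^ 2 = (\<Sum>j<k. a j * a j)"
      unfolding gd power2_norm_eq_inner a_def by (rule ip_orth[OF orth])
    have c3: "a j0 * a j0 \<le> (\<Sum>j<k. a j * a j)"
      by (rule member_le_sum) (use j0 in auto)
    have c4: "(2 * h) ^ 2 \<le> a j0 * a j0"
    proof -
      have "1 \<le> \<bar>real (n j0) - real (n' j0)\<bar>" using j0(2) by linarith
      hence "1 \<le> (real (n j0) - real (n' j0))^2"
        by (metis one_le_power power2_abs)
      hence "(2*h)^2 * 1 \<le> (2*h)^2 * (real (n j0) - real (n' j0))^2"
        by (intro mult_left_mono) auto
      thus ?thesis unfolding a_def by (simp add: power2_eq_square algebra_simps)
    qed
    have "(2 * h) ^ 2 \<le> norm (p - q) ^ 2"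
    proof -
      have "norm (grid_pt c e k h n - grid_pt c e k h n') \<le> norm (p - q)"
        using c1 c2 by simp
      hence "norm (grid_pt c e k h n - grid_pt c e k h n') ^ 2 \<le> norm (p - q) ^ 2"
        by (intro power_mono) auto
      thus ?thesis using sq c3 c4 by linarith
    qed
    hence "2 * h \<le> norm (p - q)"
      by (rule power2_le_imp_le) simp
    also have "\<dots> \<le> dX p q" using dX_ge[OF pX qX] by (simp add: dist_norm)
    finally show "2 * h \<le> dX (act (g n) x) (act (g n') x)" unfolding p_def q_def .
  qed
qed

end
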